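(* In $TTR$, if $x_1:A_1,\dots,x_n:A_n\vdash_{TTR}t:A$, $B_i\subseteq A_i$ for $1\le i\le n$, and $A\subseteq B$, then $x_1:B_1,\dots,x_n:B_n\vdash_{TTR}t:B$.
   Context: $TTR$ types: over a second-order language with first-order variables, function symbols, $n$-ary predicate variables and symbols, and a fixed system $\mathbf E$ of equations; atomic $\perp$ and $X(t_1,\dots,t_n)$; constructors $\to$, $\forall x$, $\forall X$, and $\mu Cx_1\dots x_nA\langle t_1,\dots,t_n\rangle$ for $C$ an $n$-ary predicate symbol occurring and positive in $A$. Subtyping $\subseteq$ is generated by: reflexivity; $A\subseteq A',B\subseteq B'\Rightarrow A'\to B\subseteq A\to B'$; $A[G/v]\subseteq B\Rightarrow\forall vA\subseteq B$; $A\subseteq B\Rightarrow A\subseteq\forall vB$ ($v$ not free in $A$); $A\subseteq B[v/y]\Rightarrow A\subseteq B[w/y]$ for $v=w$ an instance of an equation of $\mathbf E$; transitivity; $D[\mu C\bar xD\langle\bar z\rangle/C(\bar z)][\bar t/\bar x]\subseteq\mu C\bar xD\langle\bar t\rangle$ and its converse; $D[E/C(\bar x)]\subseteq E\Rightarrow\mu C\bar xD\langle\bar t\rangle\subseteq E[\bar t/\bar x]$. Typing $\vdash_{TTR}$: variable axiom $\Gamma,x:A\vdash x:A$; $\to$-intro/elim; $\forall$-intro (variable not free in context) and elimination (by terms or formulas) for first- and second-order variables; equational rule for instances of $\mathbf E$; subsumption: from $t:A$ and $A\subseteq B$ infer $t:B$; rule (Y): from $\Gamma\vdash t:\forall\bar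 x[C(\bar x)\to E]\to\forall\bar x[D\to E]$ infer $\Gamma\vdash(Y)t:\forall\bar x[\mu C\bar xD\langle\bar x\rangle\to E]$ ($C$ not free in $E$ nor $\Gamma$; $Y$ Turing's fixed point combinator). *)

theory Defs
  imports Main
begin

text \<open>First-order terms: bound variables (de Bruijn indices), free first-order
  variables (names), and applications of function symbols.\<close>
datatype trm = BV nat | FV nat | Fn nat "trm list"

text \<open>Predicates: bound second-order variables (de Bruijn indices, bound by
  second-order \<forall> or by \<mu>), free n-ary predicate variables (name, arity),
  and n-ary predicate symbols (name, arity).\<close>
datatype prd = PB nat | PV nat nat | PS nat nat

text \<open>Types.  \<open>All A\<close> binds first-order index 0 in A; \<open>All2 n A\<close> binds an n-ary
  second-order index 0 in A; \<open>Mu n D ts\<close> is \<open>\<mu>C x_1..x_n D \<langle>ts\<rangle>\<close>: in D the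
  n-ary C is second-order index 0 and x_(i+1) is first-order index i.\<close>
datatype fm = Bot | Atom prd "trm list" | Imp fm fm | All fm | All2 nat fm
  | Mu nat fm "trm list"

definition Alls :: "nat \<Rightarrow> fm \<Rightarrow> fm" where
  "Alls n A = (All ^^ n) A"

definition bvs :: "nat \<Rightarrow> trm list" where
  "bvs n = map BV [0..<n]"

fun liftt :: "nat \<Rightarrow> nat \<Rightarrow> trm \<Rightarrow> trm" where
  "liftt c k (BV m) = BV (if m < c then m else m + k)"
| "liftt c k (FV x) = FV x"
| "liftt c k (Fn f ts) = Fn f (map (liftt c k) ts)"

fun liftf :: "nat \<Rightarrow> nat \<Rightarrow> fm \<Rightarrow> fm" where
  "liftf c k Bot = Bot"
| "liftf c k (Atom p ts) = Atom p (map (liftt c k) ts)"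
| "liftf c k (Imp A B) = Imp (liftf c k A) (liftf c k B)"
| "liftf c k (All A) = All (liftf (Suc c) k A)"
| "liftf c k (All2 n A) = All2 n (liftf c k A)"
| "liftf c k (Mu n D ts) = Mu n (liftf (c + n) k D) (map (liftt c k) ts)"

fun liftso :: "nat \<Rightarrow> nat \<Rightarrow> fm \<Rightarrow> fm" where
  "liftso c k Bot = Bot"
| "liftso c k (Atom p ts) =
     (case p of PB j \<Rightarrow> Atom (PB (if j < c then j else j + k)) ts | _ \<Rightarrow> Atom p ts)"
| "liftso c k (Imp A B) = Imp (liftso c k A) (liftso c k B)"
| "liftso c k (All A) = All (liftso c k A)"
| "liftso c k (All2 n A) = All2 n (liftso (Suc c) k A)"
| "liftso c k (Mu n D ts) = Mu n (liftso (Suc c) k D) ts"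

text \<open>Simultaneous substitution of \<open>us ! i\<close> for first-order index \<open>d + i\<close>
  (d = number of first-order binders passed); higher indices are decremented.\<close>
fun substt :: "nat \<Rightarrow> trm list \<Rightarrow> trm \<Rightarrow> trm" where
  "substt d us (BV m) =
     (if m < d then BV m
      else if m - d < length us then liftt 0 d (us ! (m - d))
      else BV (m - length us))"
| "substt d us (FV x) = FV x"
| "substt d us (Fn f ts) = Fn f (map (substt d us) ts)"

fun substf :: "nat \<Rightarrow> trm list \<Rightarrow> fm \<Rightarrow> fm" where
  "substf d us Bot = Bot"
| "substf d us (Atom p ts) = Atom p (map (substt d us) ts)"
| "substf d us (Imp A B) = Imp (substf d us A) (substf d us B)"
| "substf d us (All A) = All (substf (Suc d) us A)"
| "substf d us (All2 n A) = All2 n (substf d us A)"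
| "substf d us (Mu n D ts) = Mu n (substf (d + n) us D) (map (substt d us) ts)"

text \<open>Second-order substitution \<open>A[G/X]\<close>: the second-order index \<open>e\<close> (e = number of
  second-order binders passed, d = number of first-order binders passed) is
  replaced by the n-ary abstraction G (its first-order indices 0..n-1 are the
  parameters); an atom \<open>X(ts)\<close> becomes \<open>G[ts/params]\<close>.\<close>
fun substso :: "nat \<Rightarrow> nat \<Rightarrow> fm \<Rightarrow> fm \<Rightarrow> fm" where
  "substso e d G Bot = Bot"
| "substso e d G (Atom p ts) =
     (case p of
        PB j \<Rightarrow> (if j < e then Atom (PB j) ts
                 else if j = e then substf 0 ts (liftf (length ts) d (liftso 0 e G))
                 else Atom (PB (j - 1)) ts)
      | _ \<Rightarrow> Atom p ts)"
| "substso e d G (Imp A B) = Imp (substso e d G A) (substso e d G B)"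
| "substso e d G (All A) = All (substso e (Suc d) G A)"
| "substso e d G (All2 n A) = All2 n (substso (Suc e) d G A)"
| "substso e d G (Mu n D ts) = Mu n (substso (Suc e) (d + n) G D) ts"

fun closeso :: "nat \<times> nat \<Rightarrow> nat \<Rightarrow> fm \<Rightarrow> fm" where
  "closeso c e Bot = Bot"
| "closeso c e (Atom p ts) =
     (case p of
        PB j \<Rightarrow> Atom (PB (if j < e then j else Suc j)) ts
      | PS s m \<Rightarrow> (if (s, m) = c then Atom (PB e) ts else Atom p ts)
      | _ \<Rightarrow> Atom p ts)"
| "closeso c e (Imp A B) = Imp (closeso c e A) (closeso c e B)"
| "closeso c e (All A) = All (closeso c e A)"
| "closeso c e (All2 n A) = All2 n (closeso c (Suc e) A)"
| "closeso c e (Mu n D ts) = Mu n (closeso c (Suc e) D) ts"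

fun fvt :: "trm \<Rightarrow> nat set" where
  "fvt (BV m) = {}"
| "fvt (FV x) = {x}"
| "fvt (Fn f ts) = (\<Union>t\<in>set ts. fvt t)"

fun fvf :: "fm \<Rightarrow> nat set" where
  "fvf Bot = {}"
| "fvf (Atom p ts) = (\<Union>t\<in>set ts. fvt t)"
| "fvf (Imp A B) = fvf A \<union> fvf B"
| "fvf (All A) = fvf A"
| "fvf (All2 n A) = fvf A"
| "fvf (Mu n D ts) = fvf D \<union> (\<Union>t\<in>set ts. fvt t)"

fun fvso :: "fm \<Rightarrow> (nat \<times> nat) set" where
  "fvso Bot = {}"
| "fvso (Atom p ts) = (case p of PV x m \<Rightarrow> {(x, m)} | _ \<Rightarrow> {})"
| "fvso (Imp A B) = fvso A \<union> fvso B"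
| "fvso (All A) = fvso A"
| "fvso (All2 n A) = fvso A"
| "fvso (Mu n D ts) = fvso D"

fun syms :: "fm \<Rightarrow> (nat \<times> nat) set" where
  "syms Bot = {}"
| "syms (Atom p ts) = (case p of PS s m \<Rightarrow> {(s, m)} | _ \<Rightarrow> {})"
| "syms (Imp A B) = syms A \<union> syms B"
| "syms (All A) = syms A"
| "syms (All2 n A) = syms A"
| "syms (Mu n D ts) = syms D"

fun lct :: "nat \<Rightarrow> trm \<Rightarrow> bool" where
  "lct k (BV m) = (m < k)"
| "lct k (FV x) = True"
| "lct k (Fn f ts) = (\<forall>t\<in>set ts. lct k t)"

fun occ :: "nat \<Rightarrow> fm \<Rightarrow> bool" where
  "occ j Bot = False"
| "occ j (Atom p ts) = (p = PB j)"
| "occ j (Imp A B) = (occ j A \<or> occ j B)"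
| "occ j (All A) = occ j A"
| "occ j (All2 n A) = occ (Suc j) A"
| "occ j (Mu n D ts) = occ (Suc j) D"

fun pol :: "bool \<Rightarrow> nat \<Rightarrow> fm \<Rightarrow> bool" where
  "pol b j Bot = True"
| "pol b j (Atom p ts) = (b \<or> p \<noteq> PB j)"
| "pol b j (Imp A B) = (pol (\<not> b) j A \<and> pol b j B)"
| "pol b j (All A) = pol b j A"
| "pol b j (All2 n A) = pol b (Suc j) A"
| "pol b j (Mu n D ts) = pol b (Suc j) D"

text \<open>\<open>wf k ar A\<close>: A is well formed with k first-order bound variables in scope
  and second-order bound variables of arities \<open>ar\<close> in scope.\<close>
fun wf :: "nat \<Rightarrow> nat list \<Rightarrow> fm \<Rightarrow> bool" where
  "wf k ar Bot = True"
| "wf k ar (Atom p ts) =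
     ((\<forall>t\<in>set ts. lct k t) \<and>
      (case p of PB j \<Rightarrow> j < length ar \<and> length ts = ar ! j
               | PV x m \<Rightarrow> length ts = m
               | PS s m \<Rightarrow> length ts = m))"
| "wf k ar (Imp A B) = (wf k ar A \<and> wf k ar B)"
| "wf k ar (All A) = wf (Suc k) ar A"
| "wf k ar (All2 n A) = wf k (n # ar) A"
| "wf k ar (Mu n D ts) =
     (wf (k + n) (n # ar) D \<and> length ts = n \<and> (\<forall>t\<in>set ts. lct k t)
      \<and> occ 0 D \<and> pol True 0 D)"

definition ty :: "fm \<Rightarrow> bool" where
  "ty A = wf 0 [] A"

fun tsub :: "(nat \<Rightarrow> trm) \<Rightarrow> trm \<Rightarrow> trm" where
  "tsub \<sigma> (BV m) = BV m"
| "tsub \<sigma> (FV x) = \<sigma> x"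
| "tsub \<sigma> (Fn f ts) = Fn f (map (tsub \<sigma>) ts)"

definition eq_inst :: "(trm \<times> trm) set \<Rightarrow> trm \<Rightarrow> trm \<Rightarrow> bool" where
  "eq_inst Eqs v w \<longleftrightarrow> (\<exists>l r \<sigma>. (l, r) \<in> Eqs \<and> (\<forall>x. lct 0 (\<sigma> x)) \<and>
      ((v = tsub \<sigma> l \<and> w = tsub \<sigma> r) \<or> (v = tsub \<sigma> r \<and> w = tsub \<sigma> l)))"

text \<open>Unfolding \<open>D[\<mu>C x D\<langle>z\<rangle>/C(z)][ts/x]\<close>.\<close>
definition unfold :: "nat \<Rightarrow> fm \<Rightarrow> trm list \<Rightarrow> fm" where
  "unfold n D ts = substf 0 ts (substso 0 0 (Mu n (liftf n (2 * n) D) (bvs n)) D)"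

inductive sub :: "(trm \<times> trm) set \<Rightarrow> fm \<Rightarrow> fm \<Rightarrow> bool" for Eqs where
  s_refl: "sub Eqs A A"
| s_imp: "sub Eqs A A' \<Longrightarrow> sub Eqs B B' \<Longrightarrow> sub Eqs (Imp A' B) (Imp A B')"
| s_allL: "sub Eqs (substf 0 [u] A) B \<Longrightarrow> lct 0 u \<Longrightarrow> sub Eqs (All A) B"
| s_all2L: "sub Eqs (substso 0 0 G A) B \<Longrightarrow> wf n [] G \<Longrightarrow> sub Eqs (All2 n A) B"
| s_allR: "sub Eqs A (substf 0 [FV x] B) \<Longrightarrow> x \<notin> fvf A \<Longrightarrow> x \<notin> fvf B
           \<Longrightarrow> sub Eqs A (All B)"
| s_all2R: "sub Eqs A (substso 0 0 (Atom (PV X n) (bvs n)) B) \<Longrightarrow> (X, n) \<notin> fvso A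
           \<Longrightarrow> (X, n) \<notin> fvso B \<Longrightarrow> sub Eqs A (All2 n B)"
| s_eq: "sub Eqs A (substf 0 [v] B) \<Longrightarrow> eq_inst Eqs v w \<Longrightarrow> sub Eqs A (substf 0 [w] B)"
| s_trans: "sub Eqs A B \<Longrightarrow> sub Eqs B C \<Longrightarrow> sub Eqs A C"
| s_fold: "ty (Mu n D ts) \<Longrightarrow> sub Eqs (unfold n D ts) (Mu n D ts)"
| s_unfold: "ty (Mu n D ts) \<Longrightarrow> sub Eqs (Mu n D ts) (unfold n D ts)"
| s_ind: "ty (Mu n D ts) \<Longrightarrow> length ys = n \<Longrightarrow> distinct ys
          \<Longrightarrow> set ys \<inter> (fvf D \<union> fvf F) = {}
          \<Longrightarrow> sub Eqs (substf 0 (map FV ys) (substso 0 0 (liftf n n F) D))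
                     (substf 0 (map FV ys) F)
          \<Longrightarrow> sub Eqs (Mu n D ts) (substf 0 ts F)"

datatype lam = LVar nat | LApp lam lam | LAbs nat lam

text \<open>Turing's fixed point combinator \<open>(\<lambda>x y. y (x x y)) (\<lambda>x y. y (x x y))\<close>.\<close>
definition Theta :: lam where
  "Theta = (let W = LAbs 0 (LAbs 1 (LApp (LVar 1) (LApp (LApp (LVar 0) (LVar 0)) (LVar 1))))
            in LApp W W)"

type_synonym ctx = "nat \<Rightarrow> fm option"

definition fv_ctx :: "ctx \<Rightarrow> nat set" where
  "fv_ctx \<Gamma> = (\<Union>A\<in>ran \<Gamma>. fvf A)"

definition fvso_ctx :: "ctx \<Rightarrow> (nat \<times> nat) set" where
  "fvso_ctx \<Gamma> = (\<Union>A\<in>ran \<Gamma>. fvso A)"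

definition syms_ctx :: "ctx \<Rightarrow> (nat \<times> nat) set" where
  "syms_ctx \<Gamma> = (\<Union>A\<in>ran \<Gamma>. syms A)"

inductive typing :: "(trm \<times> trm) set \<Rightarrow> ctx \<Rightarrow> lam \<Rightarrow> fm \<Rightarrow> bool" for Eqs where
  t_var: "\<Gamma> x = Some A \<Longrightarrow> typing Eqs \<Gamma> (LVar x) A"
| t_abs: "typing Eqs (\<Gamma>(x \<mapsto> A)) t B \<Longrightarrow> typing Eqs \<Gamma> (LAbs x t) (Imp A B)"
| t_app: "typing Eqs \<Gamma> t (Imp A B) \<Longrightarrow> typing Eqs \<Gamma> u A \<Longrightarrow> typing Eqs \<Gamma> (LApp t u) B"
| t_allI: "typing Eqs \<Gamma> t (substf 0 [FV x] A) \<Longrightarrow> x \<notin> fv_ctx \<Gamma> \<Longrightarrow> x \<notin> fvf A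
           \<Longrightarrow> typing Eqs \<Gamma> t (All A)"
| t_allE: "typing Eqs \<Gamma> t (All A) \<Longrightarrow> lct 0 u \<Longrightarrow> typing Eqs \<Gamma> t (substf 0 [u] A)"
| t_all2I: "typing Eqs \<Gamma> t (substso 0 0 (Atom (PV X n) (bvs n)) A) \<Longrightarrow> (X, n) \<notin> fvso_ctx \<Gamma>
           \<Longrightarrow> (X, n) \<notin> fvso A \<Longrightarrow> typing Eqs \<Gamma> t (All2 n A)"
| t_all2E: "typing Eqs \<Gamma> t (All2 n A) \<Longrightarrow> wf n [] G \<Longrightarrow> typing Eqs \<Gamma> t (substso 0 0 G A)"
| t_eq: "typing Eqs \<Gamma> t (substf 0 [v] A) \<Longrightarrow> eq_inst Eqs v w \<Longrightarrow> typing Eqs \<Gamma> t (substf 0 [w] A)"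
| t_sub: "typing Eqs \<Gamma> t A \<Longrightarrow> sub Eqs A B \<Longrightarrow> typing Eqs \<Gamma> t B"
| t_Y: "typing Eqs \<Gamma> t (Imp (Alls n (Imp (Atom (PS c n) (bvs n)) F)) (Alls n (Imp D F)))
        \<Longrightarrow> (c, n) \<notin> syms F \<Longrightarrow> (c, n) \<notin> syms_ctx \<Gamma>
        \<Longrightarrow> ty (Alls n (Imp (Mu n (liftf n n (closeso (c, n) 0 D)) (bvs n)) F))
        \<Longrightarrow> typing Eqs \<Gamma> (LApp Theta t)
              (Alls n (Imp (Mu n (liftf n n (closeso (c, n) 0 D)) (bvs n)) F))"

end

theory Submission
  imports Defs
begin

fun rt :: "(nat\<Rightarrow>nat) \<Rightarrow> trm \<Rightarrow> trm" where
  "rt f (BV m) = BV m"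
| "rt f (FV x) = FV (f x)"
| "rt f (Fn s ts) = Fn s (map (rt f) ts)"

fun rp :: "(nat\<Rightarrow>nat\<Rightarrow>nat) \<Rightarrow> (nat\<Rightarrow>nat\<Rightarrow>nat) \<Rightarrow> prd \<Rightarrow> prd" where
  "rp g h (PB j) = PB j"
| "rp g h (PV x m) = PV (g m x) m"
| "rp g h (PS s m) = PS (h m s) m"

fun rf :: "(nat\<Rightarrow>nat) \<Rightarrow> (nat\<Rightarrow>nat\<Rightarrow>nat) \<Rightarrow> (nat\<Rightarrow>nat\<Rightarrow>nat) \<Rightarrow> fm \<Rightarrow> fm" where
  "rf f g h Bot = Bot"
| "rf f g h (Atom p ts) = Atom (rp g h p) (map (rt f) ts)"
| "rf f g h (Imp A B) = Imp (rf f g h A) (rf f g h B)"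
| "rf f g h (All A) = All (rf f g h A)"
| "rf f g h (All2 n A) = All2 n (rf f g h A)"
| "rf f g h (Mu n D ts) = Mu n (rf f g h D) (map (rt f) ts)"

lemma rt_liftt: "rt f (liftt c k t) = liftt c k (rt f t)"
  by (induction t) auto

lemma rt_substt: "rt f (substt d us t) = substt d (map (rt f) us) (rt f t)"
  by (induction t) (auto simp: rt_liftt)

lemma lct_rt[simp]: "lct k (rt f t) = lct k t"
  by (induction t) auto

lemma fvt_rt: "fvt (rt f t) = f ` fvt t"
  by (induction t) auto

lemma rt_cong: "(\<forall>x\<in>fvt t. f x = f' x) \<Longrightarrow> rt f t = rt f' t"
  by (induction t) auto

lemma rt_id: "rt (\<lambda>x. x) t = t"
  by (induction t) (auto simp: map_idI)

lemma finite_fvt: "finite (fvt t)"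
  by (induction t) auto

lemma rf_liftf: "rf f g h (liftf c k A) = liftf c k (rf f g h A)"
  by (induction A arbitrary: c) (auto simp: rt_liftt)

lemma rf_liftso: "rf f g h (liftso c k A) = liftso c k (rf f g h A)"
  by (induction A arbitrary: c) (auto split: prd.split)

lemma rf_substf: "rf f g h (substf d us A) = substf d (map (rt f) us) (rf f g h A)"
  by (induction A arbitrary: d) (auto simp: rt_substt)

lemma rf_substso: "rf f g h (substso e d G A) = substso e d (rf f g h G) (rf f g h A)"
  by (induction A arbitrary: e d) (auto split: prd.split simp: rf_substf rf_liftf rf_liftso)

lemma rf_closeso: "\<forall>m. inj (h m) \<Longrightarrow>
   rf f g h (closeso (c,n) e A) = closeso (h n c, n) e (rf f g h A)"
  by (induction A arbitrary: e) (auto split: prd.split simp: inj_eq)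

lemma fvf_rf: "fvf (rf f g h A) = f ` fvf A"
  by (induction A) (auto simp: fvt_rt)

lemma fvso_rf: "fvso (rf f g h A) = (\<lambda>(X,m). (g m X, m)) ` fvso A"
  by (induction A) (auto split: prd.split)

lemma syms_rf: "syms (rf f g h A) = (\<lambda>(X,m). (h m X, m)) ` syms A"
  by (induction A) (auto split: prd.split)

lemma syms_closeso: "syms (closeso c e A) \<subseteq> syms A - {c}"
  by (induction A arbitrary: e) (auto split: prd.split)

lemma occ_rf[simp]: "occ j (rf f g h A) = occ j A"
proof (induction A arbitrary: j)
  case (Atom p ts) then show ?case by (cases p) auto
qed auto

lemma pol_rf[simp]: "pol b j (rf f g h A) = pol b j A"
proof (induction A arbitrary: b j)
  case (Atom p ts) then show ?case by (cases p) auto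
qed auto

lemma wf_rf[simp]: "wf k ar (rf f g h A) = wf k ar A"
  by (induction A arbitrary: k ar) (auto split: prd.split)

lemma ty_rf[simp]: "ty (rf f g h A) = ty A"
  by (simp add: ty_def)

lemma rf_cong: "(\<forall>x\<in>fvf A. f x = f' x) \<Longrightarrow> (\<forall>(X,m)\<in>fvso A. g m X = g' m X)
   \<Longrightarrow> (\<forall>(s,m)\<in>syms A. h m s = h' m s) \<Longrightarrow> rf f g h A = rf f' g' h' A"
proof (induction A)
  case (Atom p ts) then show ?case by (cases p) (auto intro: rt_cong)
next
  case (Mu n D ts) then show ?case by (auto intro: rt_cong)
qed auto

lemma rf_id: "rf (\<lambda>x. x) (\<lambda>m x. x) (\<lambda>m x. x) A = A"
proof (induction A)
  case (Atom p ts) then show ?case by (cases p) (auto simp: rt_id map_idI)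
qed (auto simp: rt_id map_idI)

lemma finite_fvf: "finite (fvf A)"
  by (induction A) (auto simp: finite_fvt)

lemma finite_fvso: "finite (fvso A)"
  by (induction A) (auto split: prd.split)

lemma finite_syms: "finite (syms A)"
  by (induction A) (auto split: prd.split)

lemma rt_bvs[simp]: "map (rt f) (bvs n) = bvs n"
  by (simp add: bvs_def)

lemma rf_Alls: "rf f g h (Alls n A) = Alls n (rf f g h A)"
  by (induction n) (auto simp: Alls_def)

lemma rf_unfold: "rf f g h (unfold n D ts) = unfold n (rf f g h D) (map (rt f) ts)"
  by (simp add: unfold_def rf_substf rf_substso rf_liftf)

lemma rt_tsub: "rt f (tsub \<sigma> l) = tsub (rt f \<circ> \<sigma>) l"
  by (induction l) auto

lemma eq_inst_rt: "eq_inst Eqs v w \<Longrightarrow> eq_inst Eqs (rt f v) (rt f w)"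
  unfolding eq_inst_def
  apply (elim exE conjE)
  subgoal for l r \<sigma>
    apply (rule exI[of _ l], rule exI[of _ r], rule exI[of _ "rt f \<circ> \<sigma>"])
    by (auto simp: rt_tsub)
  done

lemma sub_rf:
  assumes "sub Eqs A B" "inj f" "\<forall>m. inj (g m)"
  shows "sub Eqs (rf f g h A) (rf f g h B)"
  using assms(1)
proof (induction rule: sub.induct)
  case (s_refl A) then show ?case by (rule sub.s_refl)
next
  case (s_imp A A' B B') then show ?case by (auto intro: sub.s_imp)
next
  case (s_allL u A B)
  then have 1: "sub Eqs (substf 0 [rt f u] (rf f g h A)) (rf f g h B)" by (simp add: rf_substf)
  have "sub Eqs (All (rf f g h A)) (rf f g h B)" by (rule sub.s_allL[OF 1]) (simp add: s_allL.hyps)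
  then show ?case by simp
next
  case (s_all2L G A B n)
  then have 1: "sub Eqs (substso 0 0 (rf f g h G) (rf f g h A)) (rf f g h B)" by (simp add: rf_substso)
  have "sub Eqs (All2 n (rf f g h A)) (rf f g h B)" by (rule sub.s_all2L[OF 1]) (simp add: s_all2L.hyps)
  then show ?case by simp
next
  case (s_allR A x B)
  have a: "f x \<notin> fvf (rf f g h A)" "f x \<notin> fvf (rf f g h B)"
    using s_allR assms(2) by (auto simp: fvf_rf inj_eq)
  have 1: "sub Eqs (rf f g h A) (substf 0 [FV (f x)] (rf f g h B))" using s_allR.IH by (simp add: rf_substf)
  have "sub Eqs (rf f g h A) (All (rf f g h B))" using sub.s_allR[OF 1 a] .
  then show ?case by simp
next
  case (s_all2R A X n B)
  have a: "(g n X, n) \<notin> fvso (rf f g h A)" "(g n X, n) \<notin> fvso (rf f g h B)"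
    using s_all2R assms(3) by (auto simp: fvso_rf inj_eq)
  have 1: "sub Eqs (rf f g h A) (substso 0 0 (Atom (PV (g n X) n) (bvs n)) (rf f g h B))"
    using s_all2R.IH by (simp add: rf_substso)
  have "sub Eqs (rf f g h A) (All2 n (rf f g h B))" using sub.s_all2R[OF 1 a] .
  then show ?case by simp
next
  case (s_eq A v B w)
  have 1: "sub Eqs (rf f g h A) (substf 0 [rt f v] (rf f g h B))" using s_eq.IH by (simp add: rf_substf)
  have "sub Eqs (rf f g h A) (substf 0 [rt f w] (rf f g h B))"
    using sub.s_eq[OF 1 eq_inst_rt[OF s_eq.hyps(2)]] .
  then show ?case by (simp add: rf_substf)
next
  case (s_trans A B C) then show ?case by (auto intro: sub.s_trans)
next
  case (s_fold n D ts) then show ?case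
  proof -
    have "ty (rf f g h (Mu n D ts))" using s_fold ty_rf[of f g h "Mu n D ts"] by (simp only:)
    then show ?thesis using sub.s_fold by (simp add: rf_unfold)
  qed
next
  case (s_unfold n D ts)
    have "ty (rf f g h (Mu n D ts))" using s_unfold ty_rf[of f g h "Mu n D ts"] by (simp only:)
    then show ?case using sub.s_unfold by (simp add: rf_unfold)
next
  case (s_ind n D ts ys F)
  have t: "ty (Mu n (rf f g h D) (map (rt f) ts))" using s_ind.hyps(1) ty_rf[of f g h "Mu n D ts"] by (simp only: rf.simps)
  have l: "length (map f ys) = n" using s_ind.hyps(2) by simp
  have d: "distinct (map f ys)" using s_ind.hyps(3) assms(2) by (simp add: distinct_map inj_on_subset[OF assms(2)])
  have j: "set (map f ys) \<inter> (fvf (rf f g h D) \<union> fvf (rf f g h F)) = {}"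
    using s_ind.hyps(4) assms(2) unfolding fvf_rf by (auto simp: inj_eq)
  have e: "rf f g h (substf 0 (map FV ys) (substso 0 0 (liftf n n F) D)) =
     substf 0 (map FV (map f ys)) (substso 0 0 (liftf n n (rf f g h F)) (rf f g h D))"
    by (simp only: rf_substf rf_substso rf_liftf map_map) (simp add: comp_def)
  have e2: "rf f g h (substf 0 (map FV ys) F) = substf 0 (map FV (map f ys)) (rf f g h F)"
    by (simp only: rf_substf map_map) (simp add: comp_def)
  have "sub Eqs (substf 0 (map FV (map f ys)) (substso 0 0 (liftf n n (rf f g h F)) (rf f g h D)))
                     (substf 0 (map FV (map f ys)) (rf f g h F))"
    using s_ind.IH unfolding e e2 .
  then have "sub Eqs (Mu n (rf f g h D) (map (rt f) ts)) (substf 0 (map (rt f) ts) (rf f g h F))"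
    by (rule sub.s_ind[OF t l d j])
  then show ?case by (simp add: rf_substf)
qed


definition sw :: "nat \<Rightarrow> nat \<Rightarrow> nat \<Rightarrow> nat" where
  "sw a b z = (if z = a then b else if z = b then a else z)"

lemma inj_sw: "inj (sw a b)"
  unfolding inj_def sw_def by auto

lemma inj_sw_comp: "inj f \<Longrightarrow> inj (sw a b \<circ> f)"
  using inj_sw inj_compose by blast

lemma sw_a[simp]: "sw a b a = b"
  by (simp add: sw_def)

lemma sw_other: "z \<noteq> a \<Longrightarrow> z \<noteq> b \<Longrightarrow> sw a b z = z"
  by (simp add: sw_def)

lemma fresh_nat: "finite (S::nat set) \<Longrightarrow> \<exists>y. y \<notin> S"
  using ex_new_if_finite infinite_UNIV_nat by blast

lemma finite_ran_upd: "finite (ran \<Gamma>) \<Longrightarrow> finite (ran (\<Gamma>(x \<mapsto> A)))"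
proof -
  assume "finite (ran \<Gamma>)"
  moreover have "ran (\<Gamma>(x \<mapsto> A)) \<subseteq> insert A (ran \<Gamma>)"
    unfolding ran_def by auto
  ultimately show ?thesis using finite_subset by blast
qed

lemma inranI: "\<Gamma> z = Some B \<Longrightarrow> B \<in> ran \<Gamma>"
  by (auto simp: ran_def)

lemma narrow:
  assumes "typing Eqs \<Gamma> t A"
  shows "finite (ran \<Gamma>) \<Longrightarrow> inj f \<Longrightarrow> \<forall>m. inj (g m) \<Longrightarrow> \<forall>m. inj (h m)
    \<Longrightarrow> finite (ran \<Gamma>')
    \<Longrightarrow> (\<forall>x B. \<Gamma> x = Some B \<longrightarrow> (\<exists>B'. \<Gamma>' x = Some B' \<and> sub Eqs B' (rf f g h B)))
    \<Longrightarrow> typing Eqs \<Gamma>' t (rf f g h A)"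
  using assms
proof (induction arbitrary: f g h \<Gamma>' rule: typing.induct)
  case (t_var \<Gamma> x A)
  then obtain B' where "\<Gamma>' x = Some B'" "sub Eqs B' (rf f g h A)" by blast
  then show ?case by (blast intro: typing.t_var typing.t_sub)
next
  case (t_abs \<Gamma> x A t B)
  have "typing Eqs (\<Gamma>'(x \<mapsto> rf f g h A)) t (rf f g h B)"
    apply (rule t_abs.IH)
         apply (rule finite_ran_upd, rule t_abs.prems(1))
        apply (rule t_abs.prems(2))
       apply (rule t_abs.prems(3))
      apply (rule t_abs.prems(4))
     apply (rule finite_ran_upd, rule t_abs.prems(5))
    using t_abs.prems(6) by (auto intro: sub.s_refl)
  then show ?case by (simp add: typing.t_abs)
next
  case (t_app \<Gamma> t A B u)
  have "typing Eqs \<Gamma>' t (rf f g h (Imp A B))" by (rule t_app.IH(1)) (use t_app.prems in auto)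
  moreover have "typing Eqs \<Gamma>' u (rf f g h A)" by (rule t_app.IH(2)) (use t_app.prems in auto)
  ultimately show ?case by (auto intro: typing.t_app)
next
  case (t_allI \<Gamma> t x A)
  let ?S = "fv_ctx \<Gamma>' \<union> fvf (rf f g h A) \<union> (\<Union>B\<in>ran \<Gamma>. fvf (rf f g h B)) \<union> {f x}"
  have "finite ?S" using t_allI.prems by (auto simp: fv_ctx_def finite_fvf)
  then obtain y where y: "y \<notin> ?S" by (metis fresh_nat)
  define f' where "f' = sw (f x) y \<circ> f"
  have inj': "inj f'" unfolding f'_def by (rule inj_sw_comp) (use t_allI.prems in auto)
  have agree: "rf f' g h B = rf f g h B" if "x \<notin> fvf B" "y \<notin> fvf (rf f g h B)" for B
  proof (rule rf_cong)
    show "\<forall>z\<in>fvf B. f' z = f z"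
    proof
      fix z assume z: "z \<in> fvf B"
      then have "z \<noteq> x" using that by auto
      then have "f z \<noteq> f x" using t_allI.prems(2) by (auto simp: inj_eq)
      moreover have "f z \<noteq> y" using that z by (auto simp: fvf_rf)
      ultimately show "f' z = f z" by (simp add: f'_def sw_other)
    qed
  qed auto
  have ctx: "\<forall>z B. \<Gamma> z = Some B \<longrightarrow> (\<exists>B'. \<Gamma>' z = Some B' \<and> sub Eqs B' (rf f' g h B))"
  proof (intro allI impI)
    fix z B assume zB: "\<Gamma> z = Some B"
    then have "B \<in> ran \<Gamma>" by (rule inranI)
    then have "x \<notin> fvf B" "y \<notin> fvf (rf f g h B)" using t_allI.hyps(2) y by (auto simp: fv_ctx_def)
    then have "rf f' g h B = rf f g h B" by (rule agree)
    then show "\<exists>B'. \<Gamma>' z = Some B' \<and> sub Eqs B' (rf f' g h B)" using t_allI.prems(6) zB by simp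
  qed
  have "typing Eqs \<Gamma>' t (rf f' g h (substf 0 [FV x] A))"
    by (rule t_allI.IH) (use t_allI.prems inj' ctx in auto)
  moreover have "rf f' g h (substf 0 [FV x] A) = substf 0 [FV y] (rf f g h A)"
  proof -
    have A': "rf f' g h A = rf f g h A" by (rule agree) (use t_allI.hyps(3) y in auto)
    have "f' x = y" by (simp add: f'_def)
    then show ?thesis by (simp add: rf_substf A')
  qed
  ultimately have "typing Eqs \<Gamma>' t (substf 0 [FV y] (rf f g h A))" by simp
  then have "typing Eqs \<Gamma>' t (All (rf f g h A))"
    by (rule typing.t_allI) (use y in auto)
  then show ?case by simp
next
  case (t_allE \<Gamma> t A u)
  have "typing Eqs \<Gamma>' t (rf f g h (All A))" by (rule t_allE.IH) (use t_allE.prems in auto)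
  then have "typing Eqs \<Gamma>' t (substf 0 [rt f u] (rf f g h A))"
    using t_allE.hyps(2) by (auto intro: typing.t_allE)
  then show ?case by (simp add: rf_substf)
next
  case (t_all2I \<Gamma> t X n A)
  let ?S = "fst ` (fvso_ctx \<Gamma>' \<union> fvso (rf f g h A) \<union> (\<Union>B\<in>ran \<Gamma>. fvso (rf f g h B))) \<union> {g n X}"
  have "finite ?S" using t_all2I.prems by (auto simp: fvso_ctx_def finite_fvso)
  then obtain Y where y: "Y \<notin> ?S" by (metis fresh_nat)
  define g' where "g' = (\<lambda>m. if m = n then sw (g n X) Y \<circ> g n else g m)"
  have inj': "\<forall>m. inj (g' m)" unfolding g'_def using t_all2I.prems(3) by (auto intro: inj_sw_comp)
  have agree: "rf f g' h B = rf f g h B" if "(X, n) \<notin> fvso B" "Y \<notin> fst ` fvso (rf f g h B)" for B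
  proof (rule rf_cong)
    show "\<forall>(Z,m)\<in>fvso B. g' m Z = g m Z"
    proof (clarify)
      fix Z m assume z: "(Z, m) \<in> fvso B"
      show "g' m Z = g m Z"
      proof (cases "m = n")
        case True
        then have "Z \<noteq> X" using that z by auto
        then have "g n Z \<noteq> g n X" using t_all2I.prems(3) by (auto simp: inj_eq)
        moreover have "g n Z \<noteq> Y" using that z True by (force simp: fvso_rf)
        ultimately show ?thesis using True by (simp add: g'_def sw_other)
      qed (simp add: g'_def)
    qed
  qed auto
  have ctx: "\<forall>z B. \<Gamma> z = Some B \<longrightarrow> (\<exists>B'. \<Gamma>' z = Some B' \<and> sub Eqs B' (rf f g' h B))"
  proof (intro allI impI)
    fix z B assume zB: "\<Gamma> z = Some B"
    then have "B \<in> ran \<Gamma>" by (rule inranI)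
    then have "(X, n) \<notin> fvso B" "Y \<notin> fst ` fvso (rf f g h B)" using t_all2I.hyps(2) y
      by (auto simp: fvso_ctx_def)
    then have "rf f g' h B = rf f g h B" by (rule agree)
    then show "\<exists>B'. \<Gamma>' z = Some B' \<and> sub Eqs B' (rf f g' h B)" using t_all2I.prems(6) zB by simp
  qed
  have "typing Eqs \<Gamma>' t (rf f g' h (substso 0 0 (Atom (PV X n) (bvs n)) A))"
    by (rule t_all2I.IH) (use t_all2I.prems inj' ctx in auto)
  moreover have "rf f g' h (substso 0 0 (Atom (PV X n) (bvs n)) A)
      = substso 0 0 (Atom (PV Y n) (bvs n)) (rf f g h A)"
  proof -
    have A': "rf f g' h A = rf f g h A" by (rule agree) (use t_all2I.hyps(3) y in auto)
    have "g' n X = Y" by (simp add: g'_def)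
    then show ?thesis by (simp add: rf_substso A')
  qed
  ultimately have "typing Eqs \<Gamma>' t (substso 0 0 (Atom (PV Y n) (bvs n)) (rf f g h A))" by simp
  then have "typing Eqs \<Gamma>' t (All2 n (rf f g h A))"
    by (rule typing.t_all2I) (use y in force)+
  then show ?case by simp
next
  case (t_all2E \<Gamma> t n A G)
  have "typing Eqs \<Gamma>' t (rf f g h (All2 n A))" by (rule t_all2E.IH) (use t_all2E.prems in auto)
  then have "typing Eqs \<Gamma>' t (substso 0 0 (rf f g h G) (rf f g h A))"
    using t_all2E.hyps(2) by (auto intro: typing.t_all2E)
  then show ?case by (simp add: rf_substso)
next
  case (t_eq \<Gamma> t v A w)
  have "typing Eqs \<Gamma>' t (rf f g h (substf 0 [v] A))" by (rule t_eq.IH) (use t_eq.prems in auto)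
  then have 1: "typing Eqs \<Gamma>' t (substf 0 [rt f v] (rf f g h A))" by (simp add: rf_substf)
  have "typing Eqs \<Gamma>' t (substf 0 [rt f w] (rf f g h A))"
    using typing.t_eq[OF 1 eq_inst_rt[OF t_eq.hyps(2)]] .
  then show ?case by (simp add: rf_substf)
next
  case (t_sub \<Gamma> t A B)
  have "typing Eqs \<Gamma>' t (rf f g h A)" by (rule t_sub.IH) (use t_sub.prems in auto)
  moreover have "sub Eqs (rf f g h A) (rf f g h B)"
    by (rule sub_rf) (use t_sub.hyps t_sub.prems in auto)
  ultimately show ?case by (rule typing.t_sub)
next
  case (t_Y \<Gamma> t n c F D)
  let ?S = "fst ` (syms_ctx \<Gamma>' \<union> syms (rf f g h F) \<union> syms (rf f g h D) \<union> (\<Union>B\<in>ran \<Gamma>. syms (rf f g h B))) \<union> {h n c}"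
  have "finite ?S" using t_Y.prems by (auto simp: syms_ctx_def finite_syms)
  then obtain d where y: "d \<notin> ?S" by (metis fresh_nat)
  define h' where "h' = (\<lambda>m. if m = n then sw (h n c) d \<circ> h n else h m)"
  have inj': "\<forall>m. inj (h' m)" unfolding h'_def using t_Y.prems(4) by (auto intro: inj_sw_comp)
  have agree: "rf f g h' B = rf f g h B" if "(c, n) \<notin> syms B" "d \<notin> fst ` syms (rf f g h B)" for B
  proof (rule rf_cong)
    show "\<forall>(Z,m)\<in>syms B. h' m Z = h m Z"
    proof (clarify)
      fix Z m assume z: "(Z, m) \<in> syms B"
      show "h' m Z = h m Z"
      proof (cases "m = n")
        case True
        then have "Z \<noteq> c" using that z by auto
        then have "h n Z \<noteq> h n c" using t_Y.prems(4) by (auto simp: inj_eq)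
        moreover have "h n Z \<noteq> d" using that z True by (force simp: syms_rf)
        ultimately show ?thesis using True by (simp add: h'_def sw_other)
      qed (simp add: h'_def)
    qed
  qed auto
  have ctx: "\<forall>z B. \<Gamma> z = Some B \<longrightarrow> (\<exists>B'. \<Gamma>' z = Some B' \<and> sub Eqs B' (rf f g h' B))"
  proof (intro allI impI)
    fix z B assume zB: "\<Gamma> z = Some B"
    then have "B \<in> ran \<Gamma>" by (rule inranI)
    then have "(c, n) \<notin> syms B" "d \<notin> fst ` syms (rf f g h B)" using t_Y.hyps(3) y
      by (auto simp: syms_ctx_def)
    then have "rf f g h' B = rf f g h B" by (rule agree)
    then show "\<exists>B'. \<Gamma>' z = Some B' \<and> sub Eqs B' (rf f g h' B)" using t_Y.prems(6) zB by simp
  qed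
  have "h' n c = d" by (simp add: h'_def)
  have F: "rf f g h' F = rf f g h F" using agree[of F] t_Y.hyps(2) y by auto
  have "typing Eqs \<Gamma>' t (rf f g h' (Imp (Alls n (Imp (Atom (PS c n) (bvs n)) F)) (Alls n (Imp D F))))"
    by (rule t_Y.IH) (use t_Y.prems inj' ctx in auto)
  then have 1: "typing Eqs \<Gamma>' t (Imp (Alls n (Imp (Atom (PS d n) (bvs n)) (rf f g h F)))
      (Alls n (Imp (rf f g h' D) (rf f g h F))))"
    using \<open>h' n c = d\<close> by (simp add: rf_Alls F)
  have cl: "closeso (d, n) 0 (rf f g h' D) = rf f g h (closeso (c, n) 0 D)"
  proof -
    have "rf f g h' (closeso (c, n) 0 D) = closeso (h' n c, n) 0 (rf f g h' D)"
      by (rule rf_closeso[OF inj'])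
    moreover have "h' n c = d" by (simp add: h'_def)
    moreover have "rf f g h' (closeso (c, n) 0 D) = rf f g h (closeso (c, n) 0 D)"
    proof (rule agree)
      show "(c, n) \<notin> syms (closeso (c, n) 0 D)" using syms_closeso by blast
      show "d \<notin> fst ` syms (rf f g h (closeso (c, n) 0 D))"
        using syms_closeso[of "(c,n)" 0 D] y unfolding syms_rf by force
    qed
    ultimately show ?thesis by simp
  qed
  have ty: "ty (Alls n (Imp (Mu n (liftf n n (closeso (d, n) 0 (rf f g h' D))) (bvs n)) (rf f g h F)))"
    using t_Y.hyps(4) ty_rf[of f g h "Alls n (Imp (Mu n (liftf n n (closeso (c, n) 0 D)) (bvs n)) F)"]
    by (simp only: cl rf_Alls rf.simps rf_liftf rt_bvs)
  have "typing Eqs \<Gamma>' (LApp Theta t)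
     (Alls n (Imp (Mu n (liftf n n (closeso (d, n) 0 (rf f g h' D))) (bvs n)) (rf f g h F)))"
    by (rule typing.t_Y[OF 1 _ _ ty]) (use y in force)+
  then show ?case by (simp only: cl rf_Alls rf.simps rf_liftf rt_bvs)
qed

theorem lemma4p9:
  fixes Eqs :: "(trm \<times> trm) set" and xs :: "nat list" and As Bs :: "fm list"
    and t :: lam and A B :: fm
  assumes "distinct xs" and "length As = length xs" and "length Bs = length xs"
    and "\<forall>C\<in>set As. ty C" and "\<forall>C\<in>set Bs. ty C" and "ty A" and "ty B"
    and "typing Eqs (map_of (zip xs As)) t A"
    and "\<forall>i<length xs. sub Eqs (Bs ! i) (As ! i)"
    and "sub Eqs A B"
  shows "typing Eqs (map_of (zip xs Bs)) t B"
proof -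
  have ctx: "\<forall>x C. map_of (zip xs As) x = Some C \<longrightarrow>
     (\<exists>C'. map_of (zip xs Bs) x = Some C' \<and> sub Eqs C' (rf (\<lambda>x. x) (\<lambda>m x. x) (\<lambda>m x. x) C))"
  proof (intro allI impI)
    fix x C assume "map_of (zip xs As) x = Some C"
    then have "(x, C) \<in> set (zip xs As)" by (rule map_of_SomeD)
    then obtain i where i: "i < length xs" "xs ! i = x" "As ! i = C"
      using assms(2) by (auto simp: set_zip)
    have "map_of (zip xs Bs) x = Some (Bs ! i)"
      using i assms(1,3) by (metis map_of_zip_nth)
    then show "\<exists>C'. map_of (zip xs Bs) x = Some C' \<and> sub Eqs C' (rf (\<lambda>x. x) (\<lambda>m x. x) (\<lambda>m x. x) C)"
      using assms(9) i by (auto simp: rf_id)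
  qed
  have "typing Eqs (map_of (zip xs Bs)) t (rf (\<lambda>x. x) (\<lambda>m x. x) (\<lambda>m x. x) A)"
    by (rule narrow[OF assms(8)]) (use ctx finite_ran[OF finite_dom_map_of] in auto)
  then have "typing Eqs (map_of (zip xs Bs)) t A" by (simp add: rf_id)
  then show ?thesis using assms(10) by (rule typing.t_sub)
qed

end
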